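(* Let $\alpha\in[0,1)$ and let $\widehat U_n^m\in\mathcal{G}_n^m$ be a digraph whose strong component $G^*$ is the directed cycle $C_m$ ($m\ge2$). Then $$2\alpha^2+\alpha^2(n-2)+2(1-\alpha)^2\le E_\alpha(\widehat U_n^2)\le\alpha^2(n-1)^2+\alpha^2+2(1-\alpha)^2,$$ and for $m\ge3$, $$\alpha^2m+\alpha^2(n-m)\le E_\alpha(\widehat U_n^m)\le\alpha^2(n-m+1)^2+\alpha^2(m-1).$$ For $\alpha\in(0,1)$, the lower bound is attained if and only if each hanging tree $T^{(i)}$ is an in-tree rooted at its vertex $v_i$ of $C_m$, and the upper bound is attained if and only if all $n-m$ vertices outside $C_m$ are leaves of a single out-star centred at some vertex of $C_m$.
   Context: Digraphs are finite without loops or multiple arcs. $C_m$ is the directed cycle $v_1\to v_2\to\cdots\to v_m\to v_1$ ($C_2$ is a pair of opposite arcs). $A_\alpha(G)=\alpha D^+(G)+(1-\alpha)A(G)$, with $A(G)$ the adjacency matrix and $D^+(G)$ the diagonal outdegree matrix. $E_\alpha(G)=\sum_i\lambda_{\alpha i}^2$ is the sum of squares of all eigenvalues of $A_\alpha(G)$ with multiplicity. A directed tree is a digraph whose underlying graph is a tree (a single vertex allowed); an in-tree is a directed tree with all outdegrees at most $1$, its root being the vertex of outdegree $0$. The class $\mathcal{G}_n^m$ ($2\le m\le n$): $G\in\mathcal{G}_n^m$ consists of a strongly connected digraph $G^*$ on $m$ vertices $v_1,\dots,v_m$ together with directed trees $T^{(1)},\dots,T^{(m)}$, where $T^{(i)}$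 has $n_i\ge1$ vertices including $v_i$, the sets $\mathcal{V}(T^{(i)})$ are pairwise disjoint, $\mathcal{V}(T^{(i)})\cap\mathcal{V}(G^* )=\{v_i\}$, $n=\sum_i n_i$, and the arcs of $G$ are those of $G^*$ and of the $T^{(i)}$. *)

theory Defs
  imports "Jordan_Normal_Form.Char_Poly" "HOL-Library.Multiset"
begin

text \<open>Digraphs on the vertex set {0..<n}; arcs given as a set of ordered pairs.\<close>

definition outdeg :: "(nat \<times> nat) set \<Rightarrow> nat \<Rightarrow> nat" where
  "outdeg Arcs v = card {w. (v, w) \<in> Arcs}"

definition A_alpha :: "real \<Rightarrow> nat \<Rightarrow> (nat \<times> nat) set \<Rightarrow> real mat" where
  "A_alpha \<alpha> n Arcs = mat n n (\<lambda>(i, j).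
      \<alpha> * (if i = j then real (outdeg Arcs i) else 0)
      + (1 - \<alpha>) * (if (i, j) \<in> Arcs then 1 else 0))"

definition eig_mset :: "real mat \<Rightarrow> complex multiset" where
  "eig_mset A = (THE M. char_poly (map_mat complex_of_real A)
                        = (\<Prod>a\<in>#M. [:- a, 1:]))"

definition E_alpha :: "real \<Rightarrow> nat \<Rightarrow> (nat \<times> nat) set \<Rightarrow> real" where
  "E_alpha \<alpha> n Arcs = Re (\<Sum>z\<in>#eig_mset (A_alpha \<alpha> n Arcs). z\<^sup>2)"

text \<open>Directed tree: the underlying graph is a tree (no loops, no opposite arcs,
  connected, #arcs = #vertices - 1).\<close>
definition directed_tree :: "nat set \<Rightarrow> (nat \<times> nat) set \<Rightarrow> bool" where
  "directed_tree T TA \<longleftrightarrow> finite T \<and> T \<noteq> {} \<and> TA \<subseteq> T \<times> T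
     \<and> (\<forall>v. (v, v) \<notin> TA) \<and> (\<forall>u v. (u, v) \<in> TA \<longrightarrow> (v, u) \<notin> TA)
     \<and> (\<forall>u\<in>T. \<forall>v\<in>T. (u, v) \<in> (TA \<union> TA\<inverse>)\<^sup>*)
     \<and> card TA = card T - 1"

definition cycle_arcs :: "nat \<Rightarrow> (nat \<Rightarrow> nat) \<Rightarrow> (nat \<times> nat) set" where
  "cycle_arcs m c = {(c i, c ((i + 1) mod m)) | i. i < m}"

text \<open>G (vertex set {0..<n}, arcs Arcs) belongs to G_n^m with strong component G^* = C_m,
  cycle vertices c 0,...,c (m-1), and hanging directed trees (T i, TA i), i < m.\<close>
definition unicyclic_class ::
  "nat \<Rightarrow> nat \<Rightarrow> (nat \<times> nat) set \<Rightarrow> (nat \<Rightarrow> nat) \<Rightarrow> (nat \<Rightarrow> nat set)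
     \<Rightarrow> (nat \<Rightarrow> (nat \<times> nat) set) \<Rightarrow> bool" where
  "unicyclic_class n m Arcs c T TA \<longleftrightarrow>
     2 \<le> m \<and> m \<le> n \<and> inj_on c {..<m}
     \<and> (\<forall>i<m. directed_tree (T i) (TA i))
     \<and> (\<forall>i<m. T i \<inter> c ` {..<m} = {c i})
     \<and> (\<forall>i<m. \<forall>j<m. i \<noteq> j \<longrightarrow> T i \<inter> T j = {})
     \<and> (\<Union>i<m. T i) = {..<n}
     \<and> Arcs = cycle_arcs m c \<union> (\<Union>i<m. TA i)"

definition in_tree_rooted :: "nat set \<Rightarrow> (nat \<times> nat) set \<Rightarrow> nat \<Rightarrow> bool" where
  "in_tree_rooted T TA r \<longleftrightarrow> directed_tree T TA \<and> r \<in> T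
     \<and> (\<forall>v\<in>T. outdeg TA v \<le> 1) \<and> outdeg TA r = 0"

definition single_out_star ::
  "nat \<Rightarrow> nat \<Rightarrow> (nat \<Rightarrow> nat) \<Rightarrow> (nat \<Rightarrow> nat set) \<Rightarrow> (nat \<Rightarrow> (nat \<times> nat) set) \<Rightarrow> bool" where
  "single_out_star n m c T TA \<longleftrightarrow> (\<exists>j<m.
      T j = {c j} \<union> ({..<n} - c ` {..<m})
      \<and> TA j = {(c j, w) | w. w \<in> {..<n} - c ` {..<m}}
      \<and> (\<forall>i<m. i \<noteq> j \<longrightarrow> T i = {c i} \<and> TA i = {}))"

end

theory Submission
  imports Defs "Jordan_Normal_Form.Schur_Decomposition"
begin


definition trm :: "'a::comm_ring_1 mat \<Rightarrow> 'a" where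
  "trm X = (\<Sum>i<dim_row X. X $$ (i,i))"

lemma trm_comm:
  fixes X Y :: "'a::comm_ring_1 mat"
  assumes "X \<in> carrier_mat n k" "Y \<in> carrier_mat k n"
  shows "trm (X * Y) = trm (Y * X)"
proof -
  have "trm (X * Y) = (\<Sum>i<n. \<Sum>j<k. X $$ (i,j) * Y $$ (j,i))"
    using assms by (auto simp: trm_def scalar_prod_def intro!: sum.cong sum.reindex_bij_witness[of _ id id])
  also have "\<dots> = (\<Sum>j<k. \<Sum>i<n. Y $$ (j,i) * X $$ (i,j))"
    by (subst sum.swap) (simp add: mult.commute)
  also have "\<dots> = trm (Y * X)"
    using assms by (auto simp: trm_def scalar_prod_def intro!: sum.cong sum.reindex_bij_witness[of _ id id])
  finally show ?thesis .
qed

lemma prod_linear_unique: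
  fixes M :: "complex multiset"
  shows "(\<Prod>a\<in>#M. [:- a, 1:]) = (\<Prod>a\<in>#M'. [:- a, 1:]) \<Longrightarrow> M = M'"
proof (induction M arbitrary: M')
  case empty
  show ?case
  proof (rule ccontr)
    assume "{#} \<noteq> M'"
    then obtain b where "b \<in># M'" by (metis multiset_nonemptyE)
    then have "poly (\<Prod>a\<in>#M'. [:- a, 1:]) b = 0"
      by (auto simp: poly_prod_mset prod_mset_zero_iff)
    with empty show False by simp
  qed
next
  case (add x M)
  have "poly (\<Prod>a\<in>#M'. [:- a, 1:]) x = 0"
    using add.prems[symmetric] by (simp add: poly_prod_mset)
  then have "x \<in># M'"
    by (auto simp: poly_prod_mset prod_mset_zero_iff)
  then obtain M'' where M': "M' = add_mset x M''" by (metis mset_add)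
  have "[:- x, 1:] * (\<Prod>a\<in>#M. [:- a, 1:]) = [:- x, 1:] * (\<Prod>a\<in>#M''. [:- a, 1:])"
    using add.prems M' by simp
  then have "(\<Prod>a\<in>#M. [:- a, 1:]) = (\<Prod>a\<in>#M''. [:- a, 1:])"
    by (subst (asm) mult_left_cancel) auto
  with add.IH M' show ?case by simp
qed

lemma eig_sq:
  fixes A :: "real mat"
  assumes A: "A \<in> carrier_mat n n"
  shows "(\<Sum>z\<in>#eig_mset A. z\<^sup>2) = complex_of_real (\<Sum>i<n. \<Sum>j<n. A $$ (i,j) * A $$ (j,i))"
proof -
  define Ac where "Ac = map_mat complex_of_real A"
  have Ac: "Ac \<in> carrier_mat n n" using A by (simp add: Ac_def)
  obtain as where cp: "char_poly Ac = (\<Prod>a\<leftarrow>as. [:- a, 1:])"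
    using char_poly_factorized[OF Ac] by blast
  have cp': "char_poly Ac = (\<Prod>a\<in>#mset as. [:- a, 1:])"
    using cp by (metis mset_map prod_mset_prod_list)
  have "eig_mset A = mset as"
    unfolding eig_mset_def Ac_def[symmetric]
  proof (rule the_equality)
    show "char_poly Ac = (\<Prod>a\<in>#mset as. [:- a, 1:])" by (rule cp')
  next
    fix M assume "char_poly Ac = (\<Prod>a\<in>#M. [:- a, 1:])"
    then show "M = mset as" using prod_linear_unique cp' by metis
  qed
  obtain B P Q where sd: "schur_decomposition Ac as = (B,P,Q)" by (cases "schur_decomposition Ac as") auto
  from schur_decomposition[OF Ac cp sd]
  have wit: "similar_mat_wit Ac B P Q" and ut: "upper_triangular B" and dg: "diag_mat B = as" by auto
  from wit Ac have cars: "B \<in> carrier_mat n n" "P \<in> carrier_mat n n" "Q \<in> carrier_mat n n"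
    and PQ: "P * Q = 1\<^sub>m n" "Q * P = 1\<^sub>m n" and AB: "Ac = P * B * Q"
    unfolding similar_mat_wit_def Let_def by auto
  have "(\<Sum>z\<in>#mset as. z\<^sup>2) = sum_list (map (\<lambda>z. z\<^sup>2) as)"
    by (metis mset_map sum_mset_sum_list)
  also have "\<dots> = (\<Sum>i<n. B $$ (i,i) ^ 2)"
    using dg[symmetric] cars by (simp add: diag_mat_def interv_sum_list_conv_sum_set_nat atLeast0LessThan)
  also have "\<dots> = trm (B * B)"
  proof -
    have "(B * B) $$ (i,i) = B $$ (i,i) ^ 2" if i: "i < n" for i
    proof -
      have "(B * B) $$ (i,i) = (\<Sum>k<n. B $$ (i,k) * B $$ (k,i))"
        using cars i by (auto simp: scalar_prod_def intro!: sum.reindex_bij_witness[of _ id id])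
      also have "\<dots> = (\<Sum>k\<in>{i}. B $$ (i,k) * B $$ (k,i))"
      proof (rule sum.mono_neutral_right)
        show "\<forall>k\<in>{..<n} - {i}. B $$ (i,k) * B $$ (k,i) = 0"
          using ut cars i unfolding upper_triangular_def
          by (auto, metis linorder_neqE_nat mult_zero_left mult_zero_right)
      qed (use i in auto)
      finally show ?thesis by (simp add: power2_eq_square)
    qed
    then show ?thesis using cars by (simp add: trm_def)
  qed
  also have "B * B = B ^\<^sub>m 2"
    using cars by (simp add: numeral_2_eq_2)
  also have "trm (B ^\<^sub>m 2) = trm (Ac ^\<^sub>m 2)"
  proof -
    have pw: "Ac ^\<^sub>m 2 = P * B ^\<^sub>m 2 * Q" by (rule similar_mat_wit_pow_id[OF wit])
    have B2: "B ^\<^sub>m 2 \<in> carrier_mat n n" using cars by simp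
    have "Ac ^\<^sub>m 2 = P * (B ^\<^sub>m 2 * Q)" using pw assoc_mult_mat[OF cars(2) B2 cars(3)] by simp
    then have "trm (Ac ^\<^sub>m 2) = trm ((B ^\<^sub>m 2 * Q) * P)"
      using trm_comm[OF cars(2) mult_carrier_mat[OF B2 cars(3)]] by simp
    also have "(B ^\<^sub>m 2 * Q) * P = B ^\<^sub>m 2"
      using assoc_mult_mat[OF B2 cars(3) cars(2)] PQ(2) right_mult_one_mat[OF B2] by simp
    finally show ?thesis by simp
  qed
  also have "Ac ^\<^sub>m 2 = Ac * Ac"
    using Ac by (simp add: numeral_2_eq_2)
  also have "trm (Ac * Ac) = complex_of_real (\<Sum>i<n. \<Sum>j<n. A $$ (i,j) * A $$ (j,i))"
  proof -
    have "trm (Ac * Ac) = (\<Sum>i<n. \<Sum>j<n. Ac $$ (i,j) * Ac $$ (j,i))"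
      using Ac by (auto simp: trm_def scalar_prod_def intro!: sum.cong sum.reindex_bij_witness[of _ id id])
    also have "\<dots> = (\<Sum>i<n. \<Sum>j<n. complex_of_real (A $$ (i,j) * A $$ (j,i)))"
      using A by (intro sum.cong refl) (simp add: Ac_def)
    finally show ?thesis by simp
  qed
  finally show ?thesis using \<open>eig_mset A = mset as\<close> by simp
qed


lemma sum_eq_iff_pointwise:
  fixes f g :: "'a \<Rightarrow> nat"
  assumes "finite A" "\<forall>x\<in>A. f x \<le> g x"
  shows "sum f A = sum g A \<longleftrightarrow> (\<forall>x\<in>A. f x = g x)"
proof
  assume eq: "sum f A = sum g A"
  show "\<forall>x\<in>A. f x = g x"
  proof (rule ccontr)
    assume "\<not> (\<forall>x\<in>A. f x = g x)"
    then obtain x where x: "x \<in> A" "f x \<noteq> g x" by blast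
    then have "f x < g x" using assms(2) by (simp add: order_less_le)
    then have "sum f A < sum g A"
      using assms x by (intro sum_strict_mono_ex1) auto
    with eq show False by simp
  qed
next
  assume "\<forall>x\<in>A. f x = g x"
  then show "sum f A = sum g A" by (intro sum.cong) auto
qed

lemma sq_le1: "(x::nat) = x ^ 2 \<longleftrightarrow> x \<le> 1"
proof
  assume h: "x = x ^ 2"
  show "x \<le> 1"
  proof (rule ccontr)
    assume "\<not> x \<le> 1"
    then have "x * 2 \<le> x * x" by (intro mult_le_mono2) simp
    then show False using h \<open>\<not> x \<le> 1\<close> by (simp add: power2_eq_square)
  qed
next
  assume "x \<le> 1"
  then have "x = 0 \<or> x = 1" by auto
  then show "x = x ^ 2" by auto
qed

lemma P1:
  fixes d :: "'a \<Rightarrow> nat"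
  assumes fin: "finite N" and s: "(\<Sum>v\<in>N. d v) = n"
  shows "n \<le> (\<Sum>v\<in>N. d v ^ 2)" "(\<Sum>v\<in>N. d v ^ 2) = n \<longleftrightarrow> (\<forall>v\<in>N. d v \<le> 1)"
proof -
  have pw: "\<forall>v\<in>N. d v \<le> d v ^ 2" by (simp add: power2_eq_square)
  show "n \<le> (\<Sum>v\<in>N. d v ^ 2)" using s sum_mono[of N d "\<lambda>v. d v ^ 2"] pw by simp
  have "(\<Sum>v\<in>N. d v ^ 2) = n \<longleftrightarrow> (\<forall>v\<in>N. d v = d v ^ 2)"
    unfolding s[symmetric] using sum_eq_iff_pointwise[OF fin pw] by (rule trans[OF eq_commute])
  also have "\<dots> \<longleftrightarrow> (\<forall>v\<in>N. d v \<le> 1)"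
  proof -
    have "d v = d v ^ 2 \<longleftrightarrow> d v \<le> 1" for v
      by (rule sq_le1)
    then show ?thesis by simp
  qed
  finally show "(\<Sum>v\<in>N. d v ^ 2) = n \<longleftrightarrow> (\<forall>v\<in>N. d v \<le> 1)" .
qed

lemma P2:
  fixes d :: "'a \<Rightarrow> nat"
  assumes fin: "finite N" and CN: "C \<subseteq> N" and cardC: "card C = m"
    and pos: "\<forall>v\<in>C. 1 \<le> d v" and s: "(\<Sum>v\<in>N. d v) = n"
  shows "m \<le> n" "(\<Sum>v\<in>N. d v ^ 2) \<le> (n - m + 1)^2 + m - 1"
    "C \<noteq> {} \<Longrightarrow> (\<Sum>v\<in>N. d v ^ 2) = (n - m + 1)^2 + m - 1 \<longleftrightarrow>
       (\<exists>x\<in>C. d x = n - m + 1 \<and> (\<forall>v\<in>N. v \<noteq> x \<longrightarrow> d v = (if v \<in> C then 1 else 0)))"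
proof -
  have finC: "finite C" using fin CN finite_subset by blast
  define ind where "ind v = (if v \<in> C then 1 else 0 :: nat)" for v
  define e where "e v = d v - ind v" for v
  have de: "d v = e v + ind v" if "v \<in> N" for v
    using pos unfolding e_def ind_def by auto
  have sind: "(\<Sum>v\<in>N. ind v) = m"
    unfolding ind_def using fin CN cardC by (simp add: sum.If_cases Int_absorb1)
  have "(\<Sum>v\<in>N. d v) = (\<Sum>v\<in>N. e v) + m"
    using de sind by (simp add: sum.distrib)
  then have se: "(\<Sum>v\<in>N. e v) = n - m" and mn: "m \<le> n" using s by auto
  show "m \<le> n" by (rule mn)
  define K where "K = n - m"
  have seC: "(\<Sum>v\<in>N. e v * ind v) = (\<Sum>v\<in>C. e v)"
  proof -
    have "(\<Sum>v\<in>N. e v * ind v) = (\<Sum>v\<in>N. if v \<in> C then e v else 0)"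
      by (rule sum.cong) (auto simp: ind_def)
    also have "\<dots> = sum e (N \<inter> C)" using fin by (simp add: sum.inter_restrict)
    finally show ?thesis using CN by (simp add: Int_absorb1)
  qed
  have splitN: "(\<Sum>v\<in>N. e v) = (\<Sum>v\<in>C. e v) + (\<Sum>v\<in>N - C. e v)"
    using sum.subset_diff[OF CN fin, of e] by simp
  have eK: "e v \<le> K" if "v \<in> N" for v
    using member_le_sum[OF that, of e] fin se K_def by auto
  have pw: "\<forall>v\<in>N. e v ^ 2 \<le> e v * K" using eK by (simp add: power2_eq_square)
  have sq: "(\<Sum>v\<in>N. e v ^ 2) \<le> K * K"
  proof -
    have "(\<Sum>v\<in>N. e v ^ 2) \<le> (\<Sum>v\<in>N. e v * K)" using pw sum_mono[of N "\<lambda>v. e v ^ 2" "\<lambda>v. e v * K"] by simp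
    also have "\<dots> = K * K" using se K_def by (simp add: sum_distrib_right[symmetric])
    finally show ?thesis .
  qed
  have dsq: "(\<Sum>v\<in>N. d v ^ 2) = (\<Sum>v\<in>N. e v ^ 2) + 2 * (\<Sum>v\<in>C. e v) + m"
  proof -
    have "(\<Sum>v\<in>N. d v ^ 2) = (\<Sum>v\<in>N. e v ^ 2 + 2 * (e v * ind v) + ind v)"
      by (rule sum.cong) (auto simp: de power2_eq_square algebra_simps ind_def)
    also have "\<dots> = (\<Sum>v\<in>N. e v ^ 2) + 2 * (\<Sum>v\<in>N. e v * ind v) + (\<Sum>v\<in>N. ind v)"
      by (simp add: sum.distrib sum_distrib_left)
    finally show ?thesis using seC sind by simp
  qed
  have bnd: "(n - m + 1)^2 + m - 1 = K * K + 2 * K + m"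
    unfolding K_def by (simp add: power2_eq_square algebra_simps)
  have sCK: "(\<Sum>v\<in>C. e v) \<le> K" using splitN se K_def by simp
  show "(\<Sum>v\<in>N. d v ^ 2) \<le> (n - m + 1)^2 + m - 1"
    using dsq bnd sq sCK by simp
  assume Cne: "C \<noteq> {}"
  show "(\<Sum>v\<in>N. d v ^ 2) = (n - m + 1)^2 + m - 1 \<longleftrightarrow>
       (\<exists>x\<in>C. d x = n - m + 1 \<and> (\<forall>v\<in>N. v \<noteq> x \<longrightarrow> d v = (if v \<in> C then 1 else 0)))"
  proof
    assume eq: "(\<Sum>v\<in>N. d v ^ 2) = (n - m + 1)^2 + m - 1"
    have t1: "(\<Sum>v\<in>N. e v ^ 2) = K * K" and t2: "(\<Sum>v\<in>C. e v) = K"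
      using eq dsq bnd sq sCK by linarith+
    have out0: "\<forall>v\<in>N - C. e v = 0"
      using splitN se K_def t2 fin by simp
    have "(\<Sum>v\<in>N. e v ^ 2) = (\<Sum>v\<in>N. e v * K)" using t1 se K_def by (simp add: sum_distrib_right[symmetric])
    then have "\<forall>v\<in>N. e v ^ 2 = e v * K" using sum_eq_iff_pointwise[OF fin pw] by simp
    then have zk: "\<forall>v\<in>N. e v = 0 \<or> e v = K" by (simp add: power2_eq_square, blast)
    show "\<exists>x\<in>C. d x = n - m + 1 \<and> (\<forall>v\<in>N. v \<noteq> x \<longrightarrow> d v = (if v \<in> C then 1 else 0))"
    proof (cases "K = 0")
      case True
      then obtain x where "x \<in> C" using Cne by blast
      then show ?thesis using True zk de CN unfolding ind_def K_def by (intro bexI[of _ x]) auto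
    next
      case False
      have "\<not> (\<forall>x\<in>C. e x = 0)"
      proof
        assume "\<forall>x\<in>C. e x = 0"
        then have "sum e C = 0" by simp
        with t2 False show False by simp
      qed
      then obtain x where x: "x \<in> C" "e x \<noteq> 0" by blast
      have "x \<in> N" using x CN by blast
      then have exK: "e x = K" using zk x by (metis (no_types))
      have oth: "e v = 0" if "v \<in> N" "v \<noteq> x" for v
      proof (rule ccontr)
        assume "e v \<noteq> 0"
        then have evK: "e v = K" using zk that by auto
        have "e x + e v \<le> (\<Sum>v\<in>N. e v)"
        proof -
          have "(\<Sum>w\<in>{x,v}. e w) \<le> (\<Sum>w\<in>N. e w)"
            using x CN that fin by (intro sum_mono2) auto
          then show ?thesis using that by simp
        qed
        then show False using exK evK se K_def False by simp
      qed
      show ?thesis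
        using x exK oth de CN unfolding ind_def K_def by (intro bexI[of _ x]) auto
    qed
  next
    assume "\<exists>x\<in>C. d x = n - m + 1 \<and> (\<forall>v\<in>N. v \<noteq> x \<longrightarrow> d v = (if v \<in> C then 1 else 0))"
    then obtain x where x: "x \<in> C" "d x = n - m + 1"
      and oth: "\<forall>v\<in>N. v \<noteq> x \<longrightarrow> d v = (if v \<in> C then 1 else 0)" by blast
    have xN: "x \<in> N" using x CN by auto
    have "(\<Sum>v\<in>N. d v ^ 2) = d x ^ 2 + (\<Sum>v\<in>N - {x}. d v ^ 2)"
      using fin xN by (simp add: sum.remove)
    also have "(\<Sum>v\<in>N - {x}. d v ^ 2) = (\<Sum>v\<in>N - {x}. if v \<in> C - {x} then 1 else 0)"
      using oth by (intro sum.cong) auto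
    also have "\<dots> = sum (\<lambda>_. 1) ((N - {x}) \<inter> (C - {x}))"
      by (rule sum.inter_restrict[symmetric]) (use fin in simp)
    also have "(N - {x}) \<inter> (C - {x}) = C - {x}" using CN by blast
    also have "sum (\<lambda>_. 1) (C - {x}) = card (C - {x})" by simp
    also have "\<dots> = m - 1" using x finC cardC by simp
    finally have "(\<Sum>v\<in>N. d v ^ 2) = d x ^ 2 + (m - 1)" .
    show "(\<Sum>v\<in>N. d v ^ 2) = (n - m + 1)^2 + m - 1"
    proof -
      have "1 \<le> m" using x finC cardC card_gt_0_iff[of C] by auto
      then show ?thesis using x(2) \<open>(\<Sum>v\<in>N. d v ^ 2) = d x ^ 2 + (m - 1)\<close> by simp
    qed
  qed
qed


locale uc =
  fixes n m :: nat and Arcs :: "(nat \<times> nat) set" and c :: "nat \<Rightarrow> nat"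
    and T :: "nat \<Rightarrow> nat set" and TA :: "nat \<Rightarrow> (nat \<times> nat) set"
  assumes G: "unicyclic_class n m Arcs c T TA"
begin

lemma m2: "2 \<le> m" and mn: "m \<le> n" and inj: "inj_on c {..<m}"
  and dt: "i < m \<Longrightarrow> directed_tree (T i) (TA i)"
  and TC: "i < m \<Longrightarrow> T i \<inter> c ` {..<m} = {c i}"
  and disj: "i < m \<Longrightarrow> j < m \<Longrightarrow> i \<noteq> j \<Longrightarrow> T i \<inter> T j = {}"
  and UN: "(\<Union>i<m. T i) = {..<n}"
  and ArcsD: "Arcs = cycle_arcs m c \<union> (\<Union>i<m. TA i)"
  using G unfolding unicyclic_class_def by auto

lemma finT: "i < m \<Longrightarrow> finite (T i)"
  and TAsub: "i < m \<Longrightarrow> TA i \<subseteq> T i \<times> T i"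
  and noloopT: "i < m \<Longrightarrow> (v, v) \<notin> TA i"
  and antiT: "i < m \<Longrightarrow> (u, v) \<in> TA i \<Longrightarrow> (v, u) \<notin> TA i"
  and cardTA: "i < m \<Longrightarrow> card (TA i) = card (T i) - 1"
  and Tne: "i < m \<Longrightarrow> T i \<noteq> {}"
  using dt unfolding directed_tree_def by auto

lemma cT: "i < m \<Longrightarrow> c i \<in> T i"
  using TC by blast

lemma TN: "i < m \<Longrightarrow> T i \<subseteq> {..<n}"
  using UN by blast

lemma cN: "i < m \<Longrightarrow> c i < n"
  using cT TN by blast

lemma CN: "c ` {..<m} \<subseteq> {..<n}"
  using cN by auto

lemma cardC: "card (c ` {..<m}) = m"
  using inj by (simp add: card_image)

lemma finTA: "i < m \<Longrightarrow> finite (TA i)"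
  using finite_subset[OF TAsub finite_cartesian_product[OF finT finT]] by blast

lemma c_eq: "i < m \<Longrightarrow> j < m \<Longrightarrow> c i = c j \<longleftrightarrow> i = j"
  using inj by (auto dest: inj_onD)

lemma next_ne: "i < m \<Longrightarrow> (i + 1) mod m \<noteq> i"
proof (cases "i + 1 < m")
  case True
  then show ?thesis by simp
next
  case False
  assume i: "i < m"
  with False have "i + 1 = m" by simp
  then show ?thesis using m2 by auto
qed

lemma next_lt: "(i + 1) mod m < m"
  using m2 by simp

lemma next_notT: "i < m \<Longrightarrow> c ((i + 1) mod m) \<notin> T i"
proof
  assume i: "i < m" and h: "c ((i + 1) mod m) \<in> T i"
  then have "c ((i + 1) mod m) \<in> T i \<inter> c ` {..<m}" using next_lt by blast
  then have "c ((i + 1) mod m) = c i" using TC[OF i] by blast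
  then show False using c_eq[OF next_lt i] next_ne[OF i] by simp
qed

lemma T_uniq: "i < m \<Longrightarrow> j < m \<Longrightarrow> v \<in> T i \<Longrightarrow> v \<in> T j \<Longrightarrow> i = j"
  using disj by blast

lemma memT: "v < n \<Longrightarrow> \<exists>i<m. v \<in> T i"
  using UN by blast

lemma arc_iff:
  assumes i: "i < m" and v: "v \<in> T i"
  shows "(v, w) \<in> Arcs \<longleftrightarrow> (v, w) \<in> TA i \<or> (v = c i \<and> w = c ((i + 1) mod m))"
proof
  assume "(v, w) \<in> Arcs"
  then consider (cyc) k where "k < m" "v = c k" "w = c ((k + 1) mod m)"
    | (tr) j where "j < m" "(v, w) \<in> TA j"
    unfolding ArcsD cycle_arcs_def by blast
  then show "(v, w) \<in> TA i \<or> (v = c i \<and> w = c ((i + 1) mod m))"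
  proof cases
    case cyc
    then have "v \<in> T i \<inter> c ` {..<m}" using v by blast
    then have "v = c i" using TC[OF i] by blast
    then have "k = i" using cyc c_eq i by auto
    then show ?thesis using cyc by simp
  next
    case tr
    then have "v \<in> T j" using TAsub by blast
    then have "j = i" using T_uniq tr i v by blast
    then show ?thesis using tr by simp
  qed
next
  assume "(v, w) \<in> TA i \<or> (v = c i \<and> w = c ((i + 1) mod m))"
  then show "(v, w) \<in> Arcs"
    unfolding ArcsD cycle_arcs_def using i by blast
qed

lemma outset:
  assumes i: "i < m" and v: "v \<in> T i"
  shows "{w. (v, w) \<in> Arcs} = {w. (v, w) \<in> TA i} \<union> (if v = c i then {c ((i + 1) mod m)} else {})"
  using arc_iff[OF i v] by auto

lemma deg:
  assumes i: "i < m" and v: "v \<in> T i"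
  shows "outdeg Arcs v = outdeg (TA i) v + (if v = c i then 1 else 0)"
proof -
  have "{w. (v, w) \<in> TA i} \<subseteq> T i" using TAsub[OF i] by auto
  then have fin: "finite {w. (v, w) \<in> TA i}"
    using finT[OF i] finite_subset by blast
  have nin: "c ((i + 1) mod m) \<notin> {w. (v, w) \<in> TA i}"
    using next_notT[OF i] TAsub[OF i] by auto
  show ?thesis
    unfolding outdeg_def outset[OF i v] using fin nin by auto
qed

lemma sum_outdeg:
  assumes i: "i < m"
  shows "(\<Sum>v\<in>T i. outdeg (TA i) v) = card (TA i)"
proof -
  have "TA i = Sigma (T i) (\<lambda>v. {w. (v, w) \<in> TA i})"
    using TAsub[OF i] by auto
  moreover have "\<forall>v\<in>T i. finite {w. (v, w) \<in> TA i}"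
    using finT[OF i] TAsub[OF i] by (auto intro: rev_finite_subset)
  ultimately show ?thesis
    unfolding outdeg_def using card_SigmaI[OF finT[OF i], of "\<lambda>v. {w. (v, w) \<in> TA i}"] by simp
qed


lemma sumdeg: "(\<Sum>v<n. outdeg Arcs v) = n"
proof -
  have "(\<Sum>v<n. outdeg Arcs v) = (\<Sum>v\<in>(\<Union>i<m. T i). outdeg Arcs v)" using UN by simp
  also have "\<dots> = (\<Sum>i<m. \<Sum>v\<in>T i. outdeg Arcs v)"
    by (rule sum.UNION_disjoint) (auto simp: finT dest: disj)
  also have "\<dots> = (\<Sum>i<m. card (T i))"
  proof (rule sum.cong[OF refl])
    fix i assume "i \<in> {..<m}"
    then have i: "i < m" by simp
    have "(\<Sum>v\<in>T i. outdeg Arcs v) = (\<Sum>v\<in>T i. outdeg (TA i) v + (if v = c i then 1 else 0))"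
      using deg[OF i] by (intro sum.cong) auto
    also have "\<dots> = card (TA i) + 1"
      using sum_outdeg[OF i] finT[OF i] cT[OF i] by (simp add: sum.distrib)
    also have "\<dots> = card (T i)"
      using cardTA[OF i] finT[OF i] Tne[OF i] by (simp add: card_gt_0_iff Suc_leI)
    finally show "(\<Sum>v\<in>T i. outdeg Arcs v) = card (T i)" .
  qed
  also have "\<dots> = card (\<Union>i<m. T i)"
    by (rule card_UN_disjoint[symmetric]) (auto simp: finT dest: disj)
  also have "\<dots> = n" using UN by simp
  finally show ?thesis .
qed

lemma degC: "i < m \<Longrightarrow> 1 \<le> outdeg Arcs (c i)"
  using deg[OF _ cT] by simp

lemma ArcsN: "Arcs \<subseteq> {..<n} \<times> {..<n}"
proof
  fix p assume "p \<in> Arcs"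
  then consider (cyc) k where "k < m" "p = (c k, c ((k + 1) mod m))"
    | (tr) j where "j < m" "p \<in> TA j"
    unfolding ArcsD cycle_arcs_def by blast
  then show "p \<in> {..<n} \<times> {..<n}"
  proof cases
    case cyc then show ?thesis using cN next_lt by auto
  next
    case tr then show ?thesis using TAsub TN by blast
  qed
qed

lemma noloop: "(v, v) \<notin> Arcs"
proof
  assume a: "(v, v) \<in> Arcs"
  then have "v < n" using ArcsN by blast
  then obtain i where i: "i < m" "v \<in> T i" using memT by blast
  from a arc_iff[OF i] have "(v, v) \<in> TA i \<or> (v = c i \<and> v = c ((i + 1) mod m))" by simp
  then show False using noloopT[OF i(1)] next_notT[OF i(1)] i by auto
qed

lemma two_step: "i < m \<Longrightarrow> ((i + 1) mod m + 1) mod m = i \<Longrightarrow> m = 2"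
proof -
  assume i: "i < m" and h: "((i + 1) mod m + 1) mod m = i"
  show "m = 2"
  proof (cases "i + 1 < m")
    case True
    then have h2: "(i + 2) mod m = i" using h by simp
    show ?thesis
    proof (cases "i + 2 < m")
      case True then show ?thesis using h2 by simp
    next
      case False
      then have "i + 2 = m" using \<open>i + 1 < m\<close> by simp
      then show ?thesis using h2 by auto
    qed
  next
    case False
    then have "i + 1 = m" using i by simp
    then show ?thesis using h m2 by auto
  qed
qed

lemma digon: "(u, v) \<in> Arcs \<and> (v, u) \<in> Arcs \<longleftrightarrow>
   (m = 2 \<and> ((u, v) = (c 0, c 1) \<or> (u, v) = (c 1, c 0)))"
proof
  assume a: "(u, v) \<in> Arcs \<and> (v, u) \<in> Arcs"
  then have "u < n" using ArcsN by blast
  then obtain i where i: "i < m" "u \<in> T i" using memT by blast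
  from a arc_iff[OF i] have "(u, v) \<in> TA i \<or> (u = c i \<and> v = c ((i + 1) mod m))" by simp
  then show "m = 2 \<and> ((u, v) = (c 0, c 1) \<or> (u, v) = (c 1, c 0))"
  proof
    assume t: "(u, v) \<in> TA i"
    then have vT: "v \<in> T i" using TAsub[OF i(1)] by blast
    from a arc_iff[OF i(1) vT] have "(v, u) \<in> TA i \<or> (v = c i \<and> u = c ((i + 1) mod m))" by simp
    then show ?thesis using antiT[OF i(1) t] next_notT[OF i(1)] i by auto
  next
    assume cu: "u = c i \<and> v = c ((i + 1) mod m)"
    define i' where "i' = (i + 1) mod m"
    have i': "i' < m" using next_lt i'_def by simp
    have vT: "v \<in> T i'" using cu cT[OF i'] i'_def by simp
    from a arc_iff[OF i' vT] have "(v, u) \<in> TA i' \<or> (v = c i' \<and> u = c ((i' + 1) mod m))" by simp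
    then show ?thesis
    proof
      assume "(v, u) \<in> TA i'"
      then have "u \<in> T i'" using TAsub[OF i'] by blast
      then have "i = i'" using T_uniq[OF i(1) i'] i by blast
      then show ?thesis using next_ne[OF i(1)] i'_def by simp
    next
      assume "v = c i' \<and> u = c ((i' + 1) mod m)"
      then have "c i = c ((i' + 1) mod m)" using cu by simp
      then have "i = (i' + 1) mod m" using c_eq[OF i(1) next_lt[of i']] by simp
      then have m2': "m = 2" using two_step[OF i(1)] i'_def by simp
      have "i = 0 \<or> i = 1" using i(1) m2' by auto
      then show ?thesis using cu m2' by auto
    qed
  qed
next
  assume "m = 2 \<and> ((u, v) = (c 0, c 1) \<or> (u, v) = (c 1, c 0))"
  moreover have "(c 0, c 1) \<in> Arcs" "(c 1, c 0) \<in> Arcs" if "m = 2"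
  proof -
    have "(c 0, c ((0+1) mod m)) \<in> cycle_arcs m c"
      unfolding cycle_arcs_def mem_Collect_eq by (rule exI[of _ 0]) (use m2 in simp)
    moreover have "(c 1, c ((1+1) mod m)) \<in> cycle_arcs m c"
      unfolding cycle_arcs_def mem_Collect_eq by (rule exI[of _ 1]) (use m2 in simp)
    ultimately have "(c 0, c ((0+1) mod m)) \<in> cycle_arcs m c" "(c 1, c ((1+1) mod m)) \<in> cycle_arcs m c" by blast+
    then show "(c 0, c 1) \<in> Arcs" "(c 1, c 0) \<in> Arcs" using that unfolding ArcsD by auto
  qed
  ultimately show "(u, v) \<in> Arcs \<and> (v, u) \<in> Arcs" by auto
qed


lemma digon_count:
  "(\<Sum>i<n. \<Sum>j<n. (if (i, j) \<in> Arcs \<and> (j, i) \<in> Arcs then 1 else 0 :: real))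
     = (if m = 2 then 2 else 0)"
proof -
  define D where "D = (if m = 2 then {(c 0, c 1), (c 1, c 0)} else {})"
  have Dc: "(i, j) \<in> Arcs \<and> (j, i) \<in> Arcs \<longleftrightarrow> (i, j) \<in> D" for i j
    unfolding D_def using digon[of i j] by auto
  have DN: "D \<subseteq> {..<n} \<times> {..<n}"
    unfolding D_def using cN m2 by auto
  have "(\<Sum>i<n. \<Sum>j<n. (if (i, j) \<in> Arcs \<and> (j, i) \<in> Arcs then 1 else 0 :: real))
      = (\<Sum>i<n. \<Sum>j<n. (if (i, j) \<in> D then 1 else 0 :: real))"
    using Dc by simp
  also have "\<dots> = (\<Sum>p\<in>{..<n} \<times> {..<n}. (if p \<in> D then 1 else 0 :: real))"
    by (simp add: sum.cartesian_product)
  also have "\<dots> = (\<Sum>p\<in>({..<n} \<times> {..<n}) \<inter> D. 1 :: real)"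
    by (rule sum.inter_restrict[symmetric]) simp
  also have "({..<n} \<times> {..<n}) \<inter> D = D" using DN by blast
  also have "(\<Sum>p\<in>D. 1 :: real) = real (card D)" by simp
  also have "card D = (if m = 2 then 2 else 0)"
  proof -
    have "m = 2 \<Longrightarrow> c 0 \<noteq> c 1" using c_eq[of 0 1] by simp
    then show ?thesis unfolding D_def by auto
  qed
  finally show ?thesis by simp
qed

lemma Eform: "E_alpha \<alpha> n Arcs
   = \<alpha>\<^sup>2 * real (\<Sum>v<n. outdeg Arcs v ^ 2) + (1 - \<alpha>)\<^sup>2 * (if m = 2 then 2 else 0)"
proof -
  define M where "M = A_alpha \<alpha> n Arcs"
  define d where "d v = real (outdeg Arcs v)" for v
  have Mc: "M \<in> carrier_mat n n" unfolding M_def A_alpha_def by simp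
  have Mij: "M $$ (i, j) = \<alpha> * (if i = j then d i else 0) + (1 - \<alpha>) * (if (i, j) \<in> Arcs then 1 else 0)"
    if "i < n" "j < n" for i j
    using that unfolding M_def A_alpha_def d_def by simp
  have pw: "M $$ (i, j) * M $$ (j, i) = (if i = j then \<alpha>\<^sup>2 * (d i)\<^sup>2 else 0)
      + (1 - \<alpha>)\<^sup>2 * (if (i, j) \<in> Arcs \<and> (j, i) \<in> Arcs then 1 else 0)"
    if "i < n" "j < n" for i j
  proof (cases "i = j")
    case True
    then show ?thesis using Mij[OF that] noloop[of i] by (simp add: power2_eq_square)
  next
    case False
    then show ?thesis using Mij[OF that] Mij[OF that(2) that(1)] by (simp add: power2_eq_square)
  qed
  have "E_alpha \<alpha> n Arcs = (\<Sum>i<n. \<Sum>j<n. M $$ (i, j) * M $$ (j, i))"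
    unfolding E_alpha_def M_def[symmetric] eig_sq[OF Mc] by simp
  also have "\<dots> = (\<Sum>i<n. \<Sum>j<n. (if i = j then \<alpha>\<^sup>2 * (d i)\<^sup>2 else 0)
      + (1 - \<alpha>)\<^sup>2 * (if (i, j) \<in> Arcs \<and> (j, i) \<in> Arcs then 1 else 0))"
    using pw by (intro sum.cong refl) auto
  also have "\<dots> = (\<Sum>i<n. \<alpha>\<^sup>2 * (d i)\<^sup>2) + (1 - \<alpha>)\<^sup>2 *
      (\<Sum>i<n. \<Sum>j<n. (if (i, j) \<in> Arcs \<and> (j, i) \<in> Arcs then 1 else 0 :: real))"
    by (simp add: sum.distrib sum_distrib_left)
  also have "(\<Sum>i<n. \<alpha>\<^sup>2 * (d i)\<^sup>2) = \<alpha>\<^sup>2 * real (\<Sum>v<n. outdeg Arcs v ^ 2)"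
    unfolding d_def by (simp add: sum_distrib_left)
  finally show ?thesis using digon_count by simp
qed


lemma inC_iff: "i < m \<Longrightarrow> v \<in> T i \<Longrightarrow> v \<in> c ` {..<m} \<longleftrightarrow> v = c i"
  using TC by blast

lemma outdeg_pos: "i < m \<Longrightarrow> (u, w) \<in> TA i \<Longrightarrow> 0 < outdeg (TA i) u"
proof -
  assume i: "i < m" and uw: "(u, w) \<in> TA i"
  have "{x. (u, x) \<in> TA i} \<subseteq> T i" using TAsub[OF i] by auto
  then have "finite {x. (u, x) \<in> TA i}" using finT[OF i] finite_subset by blast
  moreover have "w \<in> {x. (u, x) \<in> TA i}" using uw by simp
  ultimately show ?thesis unfolding outdeg_def by (auto simp: card_gt_0_iff)
qed

lemma intree_iff: "(\<forall>v<n. outdeg Arcs v \<le> 1) \<longleftrightarrow> (\<forall>i<m. in_tree_rooted (T i) (TA i) (c i))"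
proof
  assume h: "\<forall>v<n. outdeg Arcs v \<le> 1"
  show "\<forall>i<m. in_tree_rooted (T i) (TA i) (c i)"
  proof (intro allI impI)
    fix i assume i: "i < m"
    have a: "\<forall>v\<in>T i. outdeg (TA i) v \<le> 1"
    proof
      fix v assume v: "v \<in> T i"
      then have "v < n" using TN[OF i] by blast
      then show "outdeg (TA i) v \<le> 1" using h deg[OF i v] by fastforce
    qed
    have b: "outdeg (TA i) (c i) = 0"
      using h deg[OF i cT[OF i]] cN[OF i] by fastforce
    show "in_tree_rooted (T i) (TA i) (c i)"
      unfolding in_tree_rooted_def using dt[OF i] cT[OF i] a b by blast
  qed
next
  assume h: "\<forall>i<m. in_tree_rooted (T i) (TA i) (c i)"
  show "\<forall>v<n. outdeg Arcs v \<le> 1"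
  proof (intro allI impI)
    fix v assume "v < n"
    then obtain i where i: "i < m" "v \<in> T i" using memT by blast
    have "outdeg (TA i) v \<le> 1" "outdeg (TA i) (c i) = 0"
      using h i unfolding in_tree_rooted_def by blast+
    then show "outdeg Arcs v \<le> 1" using deg[OF i] by auto
  qed
qed

lemma card_NC: "card ({..<n} - c ` {..<m}) = n - m"
  using CN cardC by (simp add: card_Diff_subset)

lemma star_iff:
  "(\<exists>x\<in>c ` {..<m}. outdeg Arcs x = n - m + 1 \<and>
      (\<forall>v\<in>{..<n}. v \<noteq> x \<longrightarrow> outdeg Arcs v = (if v \<in> c ` {..<m} then 1 else 0)))
   \<longleftrightarrow> single_out_star n m c T TA"
proof
  assume "\<exists>x\<in>c ` {..<m}. outdeg Arcs x = n - m + 1 \<and>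
      (\<forall>v\<in>{..<n}. v \<noteq> x \<longrightarrow> outdeg Arcs v = (if v \<in> c ` {..<m} then 1 else 0))"
  then obtain j where j: "j < m" and dj: "outdeg Arcs (c j) = n - m + 1"
    and oth: "\<forall>v\<in>{..<n}. v \<noteq> c j \<longrightarrow> outdeg Arcs v = (if v \<in> c ` {..<m} then 1 else 0)"
    by blast
  have z: "outdeg (TA i) v = 0" if i: "i < m" and v: "v \<in> T i" and vj: "v \<noteq> c j" for i v
  proof -
    have "v < n" using TN[OF i] v by blast
    then have "outdeg Arcs v = (if v = c i then 1 else 0)" using oth vj inC_iff[OF i v] by simp
    then show ?thesis using deg[OF i v] by simp
  qed
  have others: "T i = {c i} \<and> TA i = {}" if i: "i < m" and ij: "i \<noteq> j" for i
  proof -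
    have cij: "c i \<noteq> c j" using c_eq[OF i j] ij by simp
    have "TA i = {}"
    proof (rule ccontr)
      assume "TA i \<noteq> {}"
      then obtain u w where uw: "(u, w) \<in> TA i" by auto
      then have "u \<in> T i" using TAsub[OF i] by blast
      moreover have "u \<noteq> c j"
      proof
        assume "u = c j"
        then have "c j \<in> T i \<inter> c ` {..<m}" using \<open>u \<in> T i\<close> j by blast
        then have "c j \<in> {c i}" using TC[OF i] by simp
        then show False using cij by simp
      qed
      ultimately show False using z[OF i] outdeg_pos[OF i uw] by simp
    qed
    moreover have "T i = {c i}"
    proof -
      have "0 < card (T i)" using finT[OF i] Tne[OF i] card_gt_0_iff by blast
      then have "card (T i) = 1" using cardTA[OF i] \<open>TA i = {}\<close> by simp
      then obtain a where "T i = {a}" by (auto simp: card_Suc_eq)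
      then show ?thesis using cT[OF i] by simp
    qed
    ultimately show ?thesis by simp
  qed
  define S where "S = {w. (c j, w) \<in> TA j}"
  have cardS: "card S = n - m" using dj deg[OF j cT[OF j]] unfolding S_def outdeg_def by simp
  have SNC: "S \<subseteq> {..<n} - c ` {..<m}"
  proof
    fix w assume "w \<in> S"
    then have t: "(c j, w) \<in> TA j" unfolding S_def by simp
    then have wT: "w \<in> T j" using TAsub[OF j] by blast
    have "w \<noteq> c j" using noloopT[OF j] t by auto
    then show "w \<in> {..<n} - c ` {..<m}" using wT TN[OF j] inC_iff[OF j wT] by blast
  qed
  have S_eq: "S = {..<n} - c ` {..<m}"
    by (rule card_subset_eq) (use SNC cardS card_NC in auto)
  have TAj: "TA j = {(c j, w) |w. w \<in> {..<n} - c ` {..<m}}"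
  proof
    show "TA j \<subseteq> {(c j, w) |w. w \<in> {..<n} - c ` {..<m}}"
    proof
      fix p assume p: "p \<in> TA j"
      obtain u w where puw: "p = (u, w)" by (cases p)
      have "u \<in> T j" using p puw TAsub[OF j] by blast
      then have "u = c j" using z[OF j] outdeg_pos[OF j] p puw by fastforce
      then have "w \<in> S" using p puw S_def by simp
      then show "p \<in> {(c j, w) |w. w \<in> {..<n} - c ` {..<m}}" using S_eq puw \<open>u = c j\<close> by blast
    qed
  next
    show "{(c j, w) |w. w \<in> {..<n} - c ` {..<m}} \<subseteq> TA j"
      using S_eq unfolding S_def by blast
  qed
  have Tj: "T j = {c j} \<union> ({..<n} - c ` {..<m})"
  proof
    show "T j \<subseteq> {c j} \<union> ({..<n} - c ` {..<m})"
      using TN[OF j] inC_iff[OF j] by blast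
  next
    show "{c j} \<union> ({..<n} - c ` {..<m}) \<subseteq> T j"
      using cT[OF j] TAj TAsub[OF j] by blast
  qed
  show "single_out_star n m c T TA"
    unfolding single_out_star_def using j TAj Tj others by blast
next
  assume "single_out_star n m c T TA"
  then obtain j where j: "j < m" and Tj: "T j = {c j} \<union> ({..<n} - c ` {..<m})"
    and TAj: "TA j = {(c j, w) |w. w \<in> {..<n} - c ` {..<m}}"
    and oth: "\<forall>i<m. i \<noteq> j \<longrightarrow> T i = {c i} \<and> TA i = {}"
    unfolding single_out_star_def by blast
  have "outdeg (TA j) (c j) = n - m"
  proof -
    have "{w. (c j, w) \<in> TA j} = {..<n} - c ` {..<m}" using TAj by blast
    then show ?thesis unfolding outdeg_def using card_NC by simp
  qed
  then have dj: "outdeg Arcs (c j) = n - m + 1" using deg[OF j cT[OF j]] by simp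
  have "\<forall>v\<in>{..<n}. v \<noteq> c j \<longrightarrow> outdeg Arcs v = (if v \<in> c ` {..<m} then 1 else 0)"
  proof (intro ballI impI)
    fix v assume v: "v \<in> {..<n}" and vj: "v \<noteq> c j"
    then obtain i where i: "i < m" "v \<in> T i" using memT by blast
    show "outdeg Arcs v = (if v \<in> c ` {..<m} then 1 else 0)"
    proof (cases "i = j")
      case True
      have "{w. (v, w) \<in> TA j} = {}" using TAj vj by blast
      then have "outdeg (TA j) v = 0" unfolding outdeg_def by simp
      then show ?thesis using deg[OF i] True vj inC_iff[OF i] by simp
    next
      case False
      then have "T i = {c i}" "TA i = {}" using oth i by auto
      then have "v = c i" "outdeg (TA i) v = 0" using i unfolding outdeg_def by auto
      then show ?thesis using deg[OF i] inC_iff[OF i] by simp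
    qed
  qed
  then show "\<exists>x\<in>c ` {..<m}. outdeg Arcs x = n - m + 1 \<and>
      (\<forall>v\<in>{..<n}. v \<noteq> x \<longrightarrow> outdeg Arcs v = (if v \<in> c ` {..<m} then 1 else 0))"
    using j dj by blast
qed

end

theorem corollary3p10:
  fixes \<alpha> :: real and n m :: nat and Arcs :: "(nat \<times> nat) set"
    and c :: "nat \<Rightarrow> nat" and T :: "nat \<Rightarrow> nat set" and TA :: "nat \<Rightarrow> (nat \<times> nat) set"
  assumes "0 \<le> \<alpha>" and "\<alpha> < 1"
    and G: "unicyclic_class n m Arcs c T TA"
  shows "(m = 2 \<longrightarrow>
            2 * \<alpha>\<^sup>2 + \<alpha>\<^sup>2 * (real n - 2) + 2 * (1 - \<alpha>)\<^sup>2 \<le> E_alpha \<alpha> n Arcs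
          \<and> E_alpha \<alpha> n Arcs \<le> \<alpha>\<^sup>2 * (real n - 1)\<^sup>2 + \<alpha>\<^sup>2 + 2 * (1 - \<alpha>)\<^sup>2)
       \<and> (3 \<le> m \<longrightarrow>
            \<alpha>\<^sup>2 * real m + \<alpha>\<^sup>2 * (real n - real m) \<le> E_alpha \<alpha> n Arcs
          \<and> E_alpha \<alpha> n Arcs \<le> \<alpha>\<^sup>2 * (real n - real m + 1)\<^sup>2 + \<alpha>\<^sup>2 * (real m - 1))
       \<and> (0 < \<alpha> \<longrightarrow>
            ((if m = 2 then E_alpha \<alpha> n Arcs = 2 * \<alpha>\<^sup>2 + \<alpha>\<^sup>2 * (real n - 2) + 2 * (1 - \<alpha>)\<^sup>2
              else E_alpha \<alpha> n Arcs = \<alpha>\<^sup>2 * real m + \<alpha>\<^sup>2 * (real n - real m))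
             \<longleftrightarrow> (\<forall>i<m. in_tree_rooted (T i) (TA i) (c i)))
          \<and> ((if m = 2 then E_alpha \<alpha> n Arcs = \<alpha>\<^sup>2 * (real n - 1)\<^sup>2 + \<alpha>\<^sup>2 + 2 * (1 - \<alpha>)\<^sup>2
              else E_alpha \<alpha> n Arcs = \<alpha>\<^sup>2 * (real n - real m + 1)\<^sup>2 + \<alpha>\<^sup>2 * (real m - 1))
             \<longleftrightarrow> single_out_star n m c T TA))"
proof -
  interpret uc n m Arcs c T TA using G by unfold_locales
  define Q where "Q = (\<Sum>v<n. outdeg Arcs v ^ 2)"
  define U where "U = (n - m + 1)^2 + m - 1"
  define X where "X = (1 - \<alpha>)\<^sup>2 * (if m = 2 then 2 else 0 :: real)"
  have E: "E_alpha \<alpha> n Arcs = \<alpha>\<^sup>2 * real Q + X" unfolding Q_def X_def by (rule Eform)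
  have p1: "n \<le> Q" "Q = n \<longleftrightarrow> (\<forall>v\<in>{..<n}. outdeg Arcs v \<le> 1)"
    using P1[OF finite_lessThan sumdeg] unfolding Q_def by auto
  have pos: "\<forall>v\<in>c ` {..<m}. 1 \<le> outdeg Arcs v" using degC by auto
  have Cne: "c ` {..<m} \<noteq> {}" using m2 lessThan_empty_iff[of m] by simp
  have p2: "Q \<le> U" "Q = U \<longleftrightarrow> single_out_star n m c T TA"
    using P2(2)[OF finite_lessThan CN cardC pos sumdeg] P2(3)[OF finite_lessThan CN cardC pos sumdeg Cne]
      star_iff unfolding Q_def U_def by auto
  have intree: "Q = n \<longleftrightarrow> (\<forall>i<m. in_tree_rooted (T i) (TA i) (c i))"
    using p1(2) intree_iff by auto
  have realU: "real U = (real n - real m + 1)\<^sup>2 + (real m - 1)"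
  proof -
    have "U = (n - m + 1)^2 + (m - 1)" unfolding U_def using m2 by simp
    then show ?thesis using mn m2 by (simp add: of_nat_diff)
  qed
  have a2: "0 \<le> \<alpha>\<^sup>2" by simp
  have lo: "\<alpha>\<^sup>2 * real n \<le> \<alpha>\<^sup>2 * real Q" using p1(1) a2 by (intro mult_left_mono) auto
  have up: "\<alpha>\<^sup>2 * real Q \<le> \<alpha>\<^sup>2 * real U" using p2(1) a2 by (intro mult_left_mono) auto
  have e3: "\<alpha>\<^sup>2 * real m + \<alpha>\<^sup>2 * (real n - real m) = \<alpha>\<^sup>2 * real n" by (simp add: algebra_simps)
  have e4: "\<alpha>\<^sup>2 * (real n - real m + 1)\<^sup>2 + \<alpha>\<^sup>2 * (real m - 1) = \<alpha>\<^sup>2 * real U"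
    unfolding realU by (simp only: distrib_left)
  have eqlo: "0 < \<alpha> \<Longrightarrow> \<alpha>\<^sup>2 * real Q + X = \<alpha>\<^sup>2 * real n + X \<longleftrightarrow> Q = n" by simp
  have equp: "0 < \<alpha> \<Longrightarrow> \<alpha>\<^sup>2 * real Q + X = \<alpha>\<^sup>2 * real U + X \<longleftrightarrow> Q = U" by simp
  show ?thesis
  proof (cases "m = 2")
    case True
    have X2: "X = 2 * (1 - \<alpha>)\<^sup>2" unfolding X_def using True by simp
    have e1: "2 * \<alpha>\<^sup>2 + \<alpha>\<^sup>2 * (real n - 2) + 2 * (1 - \<alpha>)\<^sup>2 = \<alpha>\<^sup>2 * real n + X"
      using X2 by (simp add: algebra_simps)
    have e2: "\<alpha>\<^sup>2 * (real n - 1)\<^sup>2 + \<alpha>\<^sup>2 + 2 * (1 - \<alpha>)\<^sup>2 = \<alpha>\<^sup>2 * real U + X"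
      using X2 e4 True by (simp add: algebra_simps)
    show ?thesis
      unfolding e1 e2 E using True lo up eqlo equp intree p2(2) by auto
  next
    case False
    have X0: "X = 0" unfolding X_def using False by simp
    show ?thesis
      unfolding e3 e4 E X0 using False lo up eqlo equp intree p2(2) X0 by auto
  qed
qed

end
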